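(* (i) For every IFA $\mathcal{A}$ with $n$ states there is a deterministic finite automaton with at most $2^n$ states accepting $L(\mathcal{A})$. (ii) For every $n \ge 3$ there exists an IFA with $n$ states such that every deterministic finite automaton accepting its language has at least $2^n$ states.
   Context: A $\mathbb{Q}$-weighted automaton $\mathcal{A} = (Q, \Sigma, M, \alpha, \eta)$ consists of a finite state set $Q$, finite alphabet $\Sigma$, $M : \Sigma \to \mathbb{Q}^{Q\times Q}$, initial row vector $\alpha \in \mathbb{Q}^Q$, final column vector $\eta \in \mathbb{Q}^Q$; with $M(a_1\cdots a_k) = M(a_1)\cdots M(a_k)$, it assigns $L_\mathcal{A}(w) = \alpha M(w)\eta$ to each $w \in \Sigma^*$. It is an IFA if $L_\mathcal{A}(w) \in \{0,1\}$ for all $w$, and then $L(\mathcal{A}) = \{w \mid L_\mathcal{A}(w) = 1\}$. The number of states of $\mathcal{A}$ is $|Q|$. *)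

theory Defs
  imports Complex_Main
begin

text \<open>Q-weighted automata with state set Q = {0..<n}; M a is an n x n matrix,
  alpha an initial row vector, eta a final column vector (entries outside {0..<n} unused).\<close>

fun mat_word :: "nat \<Rightarrow> ('a \<Rightarrow> nat \<Rightarrow> nat \<Rightarrow> rat) \<Rightarrow> 'a list \<Rightarrow> nat \<Rightarrow> nat \<Rightarrow> rat" where
  "mat_word n M [] = (\<lambda>i j. if i = j then 1 else 0)"
| "mat_word n M (a # w) = (\<lambda>i j. \<Sum>k<n. M a i k * mat_word n M w k j)"

definition wa_weight :: "nat \<Rightarrow> ('a \<Rightarrow> nat \<Rightarrow> nat \<Rightarrow> rat) \<Rightarrow> (nat \<Rightarrow> rat) \<Rightarrow> (nat \<Rightarrow> rat) \<Rightarrow> 'a list \<Rightarrow> rat" where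
  "wa_weight n M \<alpha> \<eta> w = (\<Sum>i<n. \<Sum>j<n. \<alpha> i * mat_word n M w i j * \<eta> j)"

definition is_IFA :: "'a set \<Rightarrow> nat \<Rightarrow> ('a \<Rightarrow> nat \<Rightarrow> nat \<Rightarrow> rat) \<Rightarrow> (nat \<Rightarrow> rat) \<Rightarrow> (nat \<Rightarrow> rat) \<Rightarrow> bool" where
  "is_IFA \<Sigma> n M \<alpha> \<eta> \<longleftrightarrow> (\<forall>w \<in> lists \<Sigma>. wa_weight n M \<alpha> \<eta> w \<in> {0, 1})"

definition IFA_lang :: "'a set \<Rightarrow> nat \<Rightarrow> ('a \<Rightarrow> nat \<Rightarrow> nat \<Rightarrow> rat) \<Rightarrow> (nat \<Rightarrow> rat) \<Rightarrow> (nat \<Rightarrow> rat) \<Rightarrow> 'a list set" where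
  "IFA_lang \<Sigma> n M \<alpha> \<eta> = {w \<in> lists \<Sigma>. wa_weight n M \<alpha> \<eta> w = 1}"

definition is_DFA :: "'a set \<Rightarrow> nat set \<Rightarrow> (nat \<Rightarrow> 'a \<Rightarrow> nat) \<Rightarrow> nat \<Rightarrow> nat set \<Rightarrow> bool" where
  "is_DFA \<Sigma> S \<delta> s0 F \<longleftrightarrow> finite S \<and> s0 \<in> S \<and> F \<subseteq> S \<and> (\<forall>q \<in> S. \<forall>a \<in> \<Sigma>. \<delta> q a \<in> S)"

definition DFA_lang :: "'a set \<Rightarrow> (nat \<Rightarrow> 'a \<Rightarrow> nat) \<Rightarrow> nat \<Rightarrow> nat set \<Rightarrow> 'a list set" where
  "DFA_lang \<Sigma> \<delta> s0 F = {w \<in> lists \<Sigma>. foldl \<delta> s0 w \<in> F}"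

end

theory Submission
  imports Defs
begin

lemma mat_word_append:
  "i < n \<Longrightarrow> mat_word n M (u @ x) i j = (\<Sum>k<n. mat_word n M u i k * mat_word n M x k j)"
proof (induction u arbitrary: i)
  case Nil
  have "(\<Sum>k<n. (if i = k then 1 else 0) * mat_word n M x k j) = (\<Sum>k<n. if i = k then mat_word n M x k j else 0)"
    by (rule sum.cong) auto
  then show ?case using Nil by simp
next
  case (Cons a u)
  have "mat_word n M ((a # u) @ x) i j = (\<Sum>k<n. M a i k * (\<Sum>l<n. mat_word n M u k l * mat_word n M x l j))"
    using Cons by simp
  also have "\<dots> = (\<Sum>l<n. (\<Sum>k<n. M a i k * mat_word n M u k l) * mat_word n M x l j)"
  proof -
    have "(\<Sum>k<n. M a i k * (\<Sum>l<n. mat_word n M u k l * mat_word n M x l j))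
        = (\<Sum>k<n. \<Sum>l<n. M a i k * mat_word n M u k l * mat_word n M x l j)"
      by (simp add: sum_distrib_left mult.assoc)
    also have "\<dots> = (\<Sum>l<n. \<Sum>k<n. M a i k * mat_word n M u k l * mat_word n M x l j)"
      by (rule sum.swap)
    also have "\<dots> = (\<Sum>l<n. (\<Sum>k<n. M a i k * mat_word n M u k l) * mat_word n M x l j)"
      by (simp add: sum_distrib_right)
    finally show ?thesis .
  qed
  finally show ?case by simp
qed

definition rowv where "rowv n M \<alpha> w k = (\<Sum>i<n. \<alpha> i * mat_word n M w i k)"
definition colv where "colv n M \<eta> x k = (\<Sum>j<n. mat_word n M x k j * \<eta> j)"

lemma weight_append:
  "wa_weight n M \<alpha> \<eta> (u @ x) = (\<Sum>k<n. rowv n M \<alpha> u k * colv n M \<eta> x k)"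
proof -
  have "wa_weight n M \<alpha> \<eta> (u @ x) = (\<Sum>i<n. \<Sum>j<n. \<alpha> i * (\<Sum>k<n. mat_word n M u i k * mat_word n M x k j) * \<eta> j)"
    unfolding wa_weight_def by (simp add: mat_word_append)
  also have "\<dots> = (\<Sum>i<n. \<Sum>j<n. \<Sum>k<n. \<alpha> i * mat_word n M u i k * (mat_word n M x k j * \<eta> j))"
    by (simp add: sum_distrib_left sum_distrib_right mult.assoc)
  also have "\<dots> = (\<Sum>i<n. \<Sum>k<n. \<Sum>j<n. \<alpha> i * mat_word n M u i k * (mat_word n M x k j * \<eta> j))"
    by (rule sum.cong[OF refl], rule sum.swap)
  also have "\<dots> = (\<Sum>k<n. \<Sum>i<n. \<Sum>j<n. \<alpha> i * mat_word n M u i k * (mat_word n M x k j * \<eta> j))"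
    by (rule sum.swap)
  also have "\<dots> = (\<Sum>k<n. rowv n M \<alpha> u k * colv n M \<eta> x k)"
    unfolding rowv_def colv_def sum_product by (simp add: mult.assoc)
  finally show ?thesis .
qed

lemma alg: "(a::rat) \<noteq> 0 \<Longrightarrow> ci * b + A = (A - b / a * B) + (ci * a + B) * b / a"
  by (simp add: field_simps)

lemma elim:
  fixes g :: "nat \<Rightarrow> 'b \<Rightarrow> rat"
  shows "finite I \<Longrightarrow> card I = m \<Longrightarrow> \<exists>X \<subseteq> D. finite X \<and> card X \<le> m \<and>
     (\<forall>c. (\<forall>x\<in>X. (\<Sum>k\<in>I. c k * g k x) = 0) \<longrightarrow> (\<forall>x\<in>D. (\<Sum>k\<in>I. c k * g k x) = 0))"
proof (induction m arbitrary: I g)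
  case 0
  then show ?case by (intro exI[of _ "{}"]) auto
next
  case (Suc m)
  show ?case
  proof (cases "\<forall>k\<in>I. \<forall>x\<in>D. g k x = 0")
    case True
    then show ?thesis by (intro exI[of _ "{}"]) auto
  next
    case False
    then obtain i x0 where i: "i \<in> I" and x0: "x0 \<in> D" and nz: "g i x0 \<noteq> 0" by blast
    define I' where "I' = I - {i}"
    define h where "h k x = g k x - g k x0 / g i x0 * g i x" for k x
    have "card I' = m" "finite I'" using Suc.prems i unfolding I'_def by auto
    from Suc.IH[OF this(2,1), of h] obtain X' where X': "X' \<subseteq> D" "finite X'" "card X' \<le> m"
      "\<And>c. (\<forall>x\<in>X'. (\<Sum>k\<in>I'. c k * h k x) = 0) \<Longrightarrow> (\<forall>x\<in>D. (\<Sum>k\<in>I'. c k * h k x) = 0)" by blast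
    have key: "(\<Sum>k\<in>I. c k * g k x) = (\<Sum>k\<in>I'. c k * h k x) + (\<Sum>k\<in>I. c k * g k x0) * g i x / g i x0" for c x
    proof -
      have s: "(\<Sum>k\<in>I. f k) = f i + (\<Sum>k\<in>I'. f k)" for f :: "nat \<Rightarrow> rat"
        using Suc.prems(1) i unfolding I'_def by (simp add: sum.remove)
      have hh: "(\<Sum>k\<in>I'. c k * h k x) = (\<Sum>k\<in>I'. c k * g k x) - g i x / g i x0 * (\<Sum>k\<in>I'. c k * g k x0)"
      proof -
        have "(\<Sum>k\<in>I'. c k * h k x) = (\<Sum>k\<in>I'. c k * g k x - g i x / g i x0 * (c k * g k x0))"
          by (rule sum.cong) (auto simp: h_def right_diff_distrib)
        also have "\<dots> = (\<Sum>k\<in>I'. c k * g k x) - g i x / g i x0 * (\<Sum>k\<in>I'. c k * g k x0)"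
          by (simp only: sum_subtractf sum_distrib_left)
        finally show ?thesis .
      qed
      show ?thesis
        unfolding s[of "\<lambda>k. c k * g k x"] s[of "\<lambda>k. c k * g k x0"] hh
        by (rule alg[OF nz])
    qed
    show ?thesis
    proof (intro exI[of _ "insert x0 X'"] conjI allI impI)
      show "insert x0 X' \<subseteq> D" using X' x0 by auto
      show "finite (insert x0 X')" using X' by auto
      show "card (insert x0 X') \<le> Suc m" using X' by (simp add: card_insert_if)
      fix c assume H: "\<forall>x\<in>insert x0 X'. (\<Sum>k\<in>I. c k * g k x) = 0"
      then have z: "(\<Sum>k\<in>I. c k * g k x0) = 0" by auto
      have k2: "(\<Sum>k\<in>I. c k * g k x) = (\<Sum>k\<in>I'. c k * h k x)" for x
        using key[of c x] unfolding z by simp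
      have "\<forall>x\<in>X'. (\<Sum>k\<in>I'. c k * h k x) = 0" using H unfolding k2 by blast
      then have "\<forall>x\<in>D. (\<Sum>k\<in>I'. c k * h k x) = 0" by (rule X'(4))
      then show "\<forall>x\<in>D. (\<Sum>k\<in>I. c k * g k x) = 0" unfolding k2 .
    qed
  qed
qed


lemma part1:
  assumes ifa: "is_IFA \<Sigma> n M \<alpha> \<eta>"
  shows "\<exists>S \<delta> s0 F. is_DFA \<Sigma> S \<delta> s0 F \<and> card S \<le> 2 ^ n \<and>
                        DFA_lang \<Sigma> \<delta> s0 F = IFA_lang \<Sigma> n M \<alpha> \<eta>"
proof -
  define D where "D = lists \<Sigma>"
  define W where "W = wa_weight n M \<alpha> \<eta>"
  obtain X where X: "X \<subseteq> D" "finite X" "card X \<le> n"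
    "\<And>c. (\<forall>x\<in>X. (\<Sum>k\<in>{..<n}. c k * colv n M \<eta> x k) = 0) \<Longrightarrow> (\<forall>x\<in>D. (\<Sum>k\<in>{..<n}. c k * colv n M \<eta> x k) = 0)"
    using elim[of "{..<n}" n D "\<lambda>k x. colv n M \<eta> x k"] by auto
  have w01: "w \<in> D \<Longrightarrow> W w = 0 \<or> W w = 1" for w
    using ifa unfolding is_IFA_def D_def W_def by auto
  define \<phi> where "\<phi> u = {x\<in>X. W (u @ x) = 1}" for u
  have res: "W (u @ x) = W (u' @ x)" if u: "u \<in> D" "u' \<in> D" "\<phi> u = \<phi> u'" and x: "x \<in> D" for u u' x
  proof -
    define c where "c k = rowv n M \<alpha> u k - rowv n M \<alpha> u' k" for k
    have diff: "(\<Sum>k\<in>{..<n}. c k * colv n M \<eta> y k) = W (u @ y) - W (u' @ y)" for y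
      unfolding W_def weight_append c_def by (simp add: left_diff_distrib sum_subtractf)
    have "\<forall>y\<in>X. (\<Sum>k\<in>{..<n}. c k * colv n M \<eta> y k) = 0"
    proof
      fix y assume y: "y \<in> X"
      then have yD: "y \<in> D" using X(1) by auto
      have "u @ y \<in> D" "u' @ y \<in> D" using u yD unfolding D_def by auto
      then have a: "W (u @ y) = 0 \<or> W (u @ y) = 1" "W (u' @ y) = 0 \<or> W (u' @ y) = 1" using w01 by auto
      have "(W (u @ y) = 1) = (W (u' @ y) = 1)" using u(3) y unfolding \<phi>_def by blast
      then show "(\<Sum>k\<in>{..<n}. c k * colv n M \<eta> y k) = 0" unfolding diff using a by auto
    qed
    then have "\<forall>y\<in>D. (\<Sum>k\<in>{..<n}. c k * colv n M \<eta> y k) = 0" by (rule X(4))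
    then show ?thesis using x unfolding diff by simp
  qed
  have finP: "finite (Pow X)" using X(2) by simp
  obtain hh :: "'a list set \<Rightarrow> nat" where hh: "bij_betw hh (Pow X) {0..<card (Pow X)}"
    using ex_bij_betw_finite_nat[OF finP] by blast
  have inj: "inj_on hh (Pow X)" using hh bij_betw_def by blast
  have \<phi>P: "\<phi> u \<in> Pow X" for u unfolding \<phi>_def by auto
  have hheq: "hh (\<phi> u) = hh (\<phi> u') \<longleftrightarrow> \<phi> u = \<phi> u'" for u u'
    using inj \<phi>P inj_on_eq_iff by metis
  define rep where "rep q = (SOME u. u \<in> D \<and> hh (\<phi> u) = q)" for q
  define \<delta> where "\<delta> q a = hh (\<phi> (rep q @ [a]))" for q a
  define S where "S = (\<lambda>u. hh (\<phi> u)) ` D"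
  define F where "F = (\<lambda>u. hh (\<phi> u)) ` {u\<in>D. W u = 1}"
  define s0 where "s0 = hh (\<phi> [])"
  have rep: "rep (hh (\<phi> w)) \<in> D \<and> \<phi> (rep (hh (\<phi> w))) = \<phi> w" if "w \<in> D" for w
  proof -
    have "\<exists>u. u \<in> D \<and> hh (\<phi> u) = hh (\<phi> w)" using that by blast
    then have "rep (hh (\<phi> w)) \<in> D \<and> hh (\<phi> (rep (hh (\<phi> w)))) = hh (\<phi> w)"
      unfolding rep_def by (rule someI_ex)
    then show ?thesis using hheq by blast
  qed
  have step: "\<phi> (u @ [a]) = \<phi> (w @ [a])" if "u \<in> D" "w \<in> D" "\<phi> u = \<phi> w" "a \<in> \<Sigma>" for u w a
  proof -
    have "W ((u @ [a]) @ x) = W ((w @ [a]) @ x)" if "x \<in> X" for x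
    proof -
      have "a # x \<in> D" using \<open>a \<in> \<Sigma>\<close> that X(1) unfolding D_def by auto
      then show ?thesis using res[OF \<open>u \<in> D\<close> \<open>w \<in> D\<close> \<open>\<phi> u = \<phi> w\<close>] by simp
    qed
    then show ?thesis unfolding \<phi>_def by auto
  qed
  have run: "foldl \<delta> s0 w = hh (\<phi> w)" if "w \<in> D" for w
    using that
  proof (induction w rule: rev_induct)
    case Nil
    then show ?case by (simp add: s0_def)
  next
    case (snoc a w)
    then have wD: "w \<in> D" and a: "a \<in> \<Sigma>" unfolding D_def by auto
    have "foldl \<delta> s0 (w @ [a]) = hh (\<phi> (rep (hh (\<phi> w)) @ [a]))"
    proof -
      have "foldl \<delta> s0 (w @ [a]) = \<delta> (foldl \<delta> s0 w) a" by simp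
      also have "\<dots> = \<delta> (hh (\<phi> w)) a" using snoc.IH[OF wD] by simp
      finally show ?thesis unfolding \<delta>_def .
    qed
    also have "\<dots> = hh (\<phi> (w @ [a]))"
      using step[of "rep (hh (\<phi> w))" w a] rep[OF wD] wD a by simp
    finally show ?case .
  qed
  have dfa: "is_DFA \<Sigma> S \<delta> s0 F"
    unfolding is_DFA_def
  proof (intro conjI ballI)
    have "S \<subseteq> hh ` Pow X" unfolding S_def using \<phi>P by auto
    then show "finite S" using finP finite_subset by blast
    show "s0 \<in> S" unfolding s0_def S_def D_def by auto
    show "F \<subseteq> S" unfolding F_def S_def by auto
    fix q a assume q: "q \<in> S" and a: "a \<in> \<Sigma>"
    then obtain w where w: "w \<in> D" "q = hh (\<phi> w)" unfolding S_def by auto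
    have "rep q @ [a] \<in> D" using rep[OF w(1)] w(2) a unfolding D_def by auto
    then show "\<delta> q a \<in> S" unfolding \<delta>_def S_def by blast
  qed
  have card: "card S \<le> 2 ^ n"
  proof -
    have "S \<subseteq> hh ` Pow X" unfolding S_def using \<phi>P by auto
    then have "card S \<le> card (hh ` Pow X)" using finP by (simp add: card_mono)
    also have "\<dots> \<le> card (Pow X)" by (rule card_image_le[OF finP])
    also have "\<dots> = 2 ^ card X" using X(2) by (simp add: card_Pow)
    also have "\<dots> \<le> 2 ^ n" using X(3) by simp
    finally show ?thesis .
  qed
  have lang: "DFA_lang \<Sigma> \<delta> s0 F = IFA_lang \<Sigma> n M \<alpha> \<eta>"
  proof -
    have "foldl \<delta> s0 w \<in> F \<longleftrightarrow> W w = 1" if w: "w \<in> D" for w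
    proof
      assume "foldl \<delta> s0 w \<in> F"
      then obtain u where u: "u \<in> D" "W u = 1" "hh (\<phi> u) = hh (\<phi> w)" unfolding run[OF w] F_def by auto
      then have "W (u @ []) = W (w @ [])" using res[of u w "[]"] w hheq unfolding D_def by auto
      then show "W w = 1" using u by simp
    next
      assume "W w = 1"
      then show "foldl \<delta> s0 w \<in> F" unfolding run[OF w] F_def using w by auto
    qed
    then show ?thesis unfolding DFA_lang_def IFA_lang_def D_def W_def by auto
  qed
  show ?thesis using dfa card lang by blast
qed


lemma rowv_Nil: "j < n \<Longrightarrow> rowv n M \<alpha> [] j = \<alpha> j"
proof -
  assume j: "j < n"
  have "rowv n M \<alpha> [] j = (\<Sum>i<n. if i = j then \<alpha> i else 0)"
    unfolding rowv_def by (rule sum.cong) auto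
  then show ?thesis using j by simp
qed

lemma mat_word_single: "j < n \<Longrightarrow> mat_word n M [a] k j = M a k j"
proof -
  assume j: "j < n"
  have "mat_word n M [a] k j = (\<Sum>l<n. M a k l * (if l = j then 1 else 0))" by simp
  also have "\<dots> = (\<Sum>l<n. if l = j then M a k l else 0)" by (rule sum.cong) auto
  finally show ?thesis using j by simp
qed

lemma rowv_snoc: "j < n \<Longrightarrow> rowv n M \<alpha> (w @ [a]) j = (\<Sum>k<n. rowv n M \<alpha> w k * M a k j)"
proof -
  assume j: "j < n"
  have "rowv n M \<alpha> (w @ [a]) j = (\<Sum>i<n. \<alpha> i * (\<Sum>k<n. mat_word n M w i k * M a k j))"
    unfolding rowv_def by (rule sum.cong) (auto simp: mat_word_append mat_word_single j simp del: mat_word.simps)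
  also have "\<dots> = (\<Sum>i<n. \<Sum>k<n. \<alpha> i * mat_word n M w i k * M a k j)"
    by (simp add: sum_distrib_left mult.assoc)
  also have "\<dots> = (\<Sum>k<n. \<Sum>i<n. \<alpha> i * mat_word n M w i k * M a k j)"
    by (rule sum.swap)
  also have "\<dots> = (\<Sum>k<n. rowv n M \<alpha> w k * M a k j)"
    unfolding rowv_def by (simp add: sum_distrib_right)
  finally show ?thesis .
qed

lemma weight_rowv: "wa_weight n M \<alpha> \<eta> w = (\<Sum>j<n. rowv n M \<alpha> w j * \<eta> j)"
proof -
  have "wa_weight n M \<alpha> \<eta> w = (\<Sum>j<n. \<Sum>i<n. \<alpha> i * mat_word n M w i j * \<eta> j)"
    unfolding wa_weight_def by (rule sum.swap)
  then show ?thesis unfolding rowv_def by (simp add: sum_distrib_right)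
qed

definition exM :: "nat \<Rightarrow> nat \<Rightarrow> nat \<Rightarrow> nat \<Rightarrow> rat" where
  "exM n a i j = (if a < n then (if i = a then 1 else 0) else (if i = j \<and> j \<noteq> a - n then 1 else 0))"

lemma ex_snoc_test: "j < n \<Longrightarrow> a < n \<Longrightarrow> rowv n (exM n) \<alpha> (w @ [a]) j = rowv n (exM n) \<alpha> w a"
proof -
  assume j: "j < n" and a: "a < n"
  have "rowv n (exM n) \<alpha> (w @ [a]) j = (\<Sum>k<n. if k = a then rowv n (exM n) \<alpha> w k else 0)"
  proof -
    have "rowv n (exM n) \<alpha> w k * exM n a k j = (if k = a then rowv n (exM n) \<alpha> w k else 0)" for k
      using a by (simp add: exM_def)
    then show ?thesis unfolding rowv_snoc[OF j] by simp
  qed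
  then show ?thesis using a by simp
qed

lemma ex_snoc_zero: "j < n \<Longrightarrow> n \<le> a \<Longrightarrow>
   rowv n (exM n) \<alpha> (w @ [a]) j = (if j = a - n then 0 else rowv n (exM n) \<alpha> w j)"
proof -
  assume j: "j < n" and a: "n \<le> a"
  have "rowv n (exM n) \<alpha> (w @ [a]) j = (\<Sum>k<n. if k = j then (if j = a - n then 0 else rowv n (exM n) \<alpha> w k) else 0)"
  proof -
    have "rowv n (exM n) \<alpha> w k * exM n a k j = (if k = j then (if j = a - n then 0 else rowv n (exM n) \<alpha> w k) else 0)" for k
      using a by (simp add: exM_def)
    then show ?thesis unfolding rowv_snoc[OF j] by simp
  qed
  then show ?thesis using j by simp
qed

lemma ex_01: "j < n \<Longrightarrow> rowv n (exM n) (\<lambda>_. 1) w j = 0 \<or> rowv n (exM n) (\<lambda>_. 1) w j = 1"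
proof (induction w arbitrary: j rule: rev_induct)
  case Nil
  then show ?case by (simp add: rowv_Nil)
next
  case (snoc a w)
  show ?case
  proof (cases "a < n")
    case True
    then show ?thesis using snoc ex_snoc_test by simp
  next
    case False
    then show ?thesis using snoc ex_snoc_zero[of j n a] by simp
  qed
qed

lemma ex_zeros: "set ks \<subseteq> {..<n} \<Longrightarrow> j < n \<Longrightarrow>
   rowv n (exM n) (\<lambda>_. 1) (map (\<lambda>k. n + k) ks) j = (if j \<in> set ks then 0 else 1)"
proof (induction ks arbitrary: j rule: rev_induct)
  case Nil
  then show ?case by (simp add: rowv_Nil)
next
  case (snoc k ks)
  then show ?case using ex_snoc_zero[of j n "n + k"] by auto
qed

lemma part2:
  assumes n: "n \<ge> 1"
  shows "\<exists>(\<Sigma> :: nat set) M \<alpha> \<eta>. finite \<Sigma> \<and> is_IFA \<Sigma> n M \<alpha> \<eta> \<and>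
            (\<forall>S \<delta> s0 F. is_DFA \<Sigma> S \<delta> s0 F \<and> DFA_lang \<Sigma> \<delta> s0 F = IFA_lang \<Sigma> n M \<alpha> \<eta>
                 \<longrightarrow> card S \<ge> 2 ^ n)"
proof -
  define \<Sigma> where "\<Sigma> = {..<2 * n}"
  define \<alpha> :: "nat \<Rightarrow> rat" where "\<alpha> = (\<lambda>_. 1)"
  define \<eta> :: "nat \<Rightarrow> rat" where "\<eta> = (\<lambda>j. if j = 0 then 1 else 0)"
  have W: "wa_weight n (exM n) \<alpha> \<eta> w = rowv n (exM n) \<alpha> w 0" for w
  proof -
    have "wa_weight n (exM n) \<alpha> \<eta> w = (\<Sum>j<n. if j = 0 then rowv n (exM n) \<alpha> w j else 0)"
      unfolding weight_rowv by (rule sum.cong) (auto simp: \<eta>_def)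
    then show ?thesis using n by simp
  qed
  have ifa: "is_IFA \<Sigma> n (exM n) \<alpha> \<eta>"
  proof -
    have "wa_weight n (exM n) \<alpha> \<eta> w \<in> {0, 1}" for w
      using W[of w] ex_01[of 0 n w] n unfolding \<alpha>_def by auto
    then show ?thesis unfolding is_IFA_def by blast
  qed
  have lower: "card S \<ge> 2 ^ n" if dfa: "is_DFA \<Sigma> S \<delta> s0 F" and
    lang: "DFA_lang \<Sigma> \<delta> s0 F = IFA_lang \<Sigma> n (exM n) \<alpha> \<eta>" for S \<delta> s0 F
  proof -
    have inS: "foldl \<delta> s0 w \<in> S" if "w \<in> lists \<Sigma>" for w
      using that
    proof (induction w rule: rev_induct)
      case Nil
      then show ?case using dfa unfolding is_DFA_def by simp
    next
      case (snoc a w)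
      then show ?case using dfa unfolding is_DFA_def by auto
    qed
    define u where "u T = map (\<lambda>k. n + k) (sorted_list_of_set ({..<n} - T))" for T
    have uL: "u T \<in> lists \<Sigma>" for T unfolding u_def \<Sigma>_def by auto
    have uv: "rowv n (exM n) \<alpha> (u T) j = (if j \<in> T then 1 else 0)" if "j < n" for T j
      unfolding u_def \<alpha>_def using ex_zeros[of "sorted_list_of_set ({..<n} - T)" n j] that by auto
    define f where "f T = foldl \<delta> s0 (u T)" for T
    have inj: "inj_on f (Pow {..<n})"
    proof (rule inj_onI, rule ccontr)
      fix T T' assume T: "T \<in> Pow {..<n}" "T' \<in> Pow {..<n}" and eq: "f T = f T'" and ne: "T \<noteq> T'"
      have key: "k \<in> T \<longleftrightarrow> k \<in> T'" if k: "k < n" for k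
      proof -
        have L: "u T @ [k] \<in> lists \<Sigma>" "u T' @ [k] \<in> lists \<Sigma>" using uL k unfolding \<Sigma>_def by auto
        have "foldl \<delta> s0 (u T @ [k]) = foldl \<delta> s0 (u T' @ [k])" using eq unfolding f_def by simp
        then have "(u T @ [k] \<in> DFA_lang \<Sigma> \<delta> s0 F) = (u T' @ [k] \<in> DFA_lang \<Sigma> \<delta> s0 F)"
          using L unfolding DFA_lang_def by simp
        then have "(wa_weight n (exM n) \<alpha> \<eta> (u T @ [k]) = 1) = (wa_weight n (exM n) \<alpha> \<eta> (u T' @ [k]) = 1)"
          using L unfolding lang IFA_lang_def by simp
        then show ?thesis unfolding W using ex_snoc_test[of 0 n k] n k uv[OF k] by (auto split: if_splits)
      qed
      have "T = T'" using T key by auto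
      then show False using ne by simp
    qed
    have "f ` Pow {..<n} \<subseteq> S" unfolding f_def using inS uL by auto
    moreover have "finite S" using dfa unfolding is_DFA_def by simp
    ultimately have "card (f ` Pow {..<n}) \<le> card S" by (simp add: card_mono)
    moreover have "card (f ` Pow {..<n}) = 2 ^ n" using inj by (simp add: card_image card_Pow)
    ultimately show ?thesis by simp
  qed
  show ?thesis
    apply (rule exI[of _ \<Sigma>], rule exI[of _ "exM n"], rule exI[of _ \<alpha>], rule exI[of _ \<eta>])
    using ifa lower by (auto simp: \<Sigma>_def)
qed


theorem corollary2:
  shows "(\<forall>(\<Sigma> :: 'a set) n M \<alpha> \<eta>. finite \<Sigma> \<and> is_IFA \<Sigma> n M \<alpha> \<eta> \<longrightarrow>
            (\<exists>S \<delta> s0 F. is_DFA \<Sigma> S \<delta> s0 F \<and> card S \<le> 2 ^ n \<and>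
                        DFA_lang \<Sigma> \<delta> s0 F = IFA_lang \<Sigma> n M \<alpha> \<eta>))
       \<and> (\<forall>n \<ge> 3. \<exists>(\<Sigma> :: nat set) M \<alpha> \<eta>. finite \<Sigma> \<and> is_IFA \<Sigma> n M \<alpha> \<eta> \<and>
            (\<forall>S \<delta> s0 F. is_DFA \<Sigma> S \<delta> s0 F \<and> DFA_lang \<Sigma> \<delta> s0 F = IFA_lang \<Sigma> n M \<alpha> \<eta>
                 \<longrightarrow> card S \<ge> 2 ^ n))"
  proof (intro conjI allI impI)
  fix \<Sigma> :: "'a set" and n M \<alpha> \<eta>
  assume "finite \<Sigma> \<and> is_IFA \<Sigma> n M \<alpha> \<eta>"
  then show "\<exists>S \<delta> s0 F. is_DFA \<Sigma> S \<delta> s0 F \<and> card S \<le> 2 ^ n \<and>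
                        DFA_lang \<Sigma> \<delta> s0 F = IFA_lang \<Sigma> n M \<alpha> \<eta>"
    using part1 by blast
next
  fix n :: nat assume "n \<ge> 3"
  then show "\<exists>(\<Sigma> :: nat set) M \<alpha> \<eta>. finite \<Sigma> \<and> is_IFA \<Sigma> n M \<alpha> \<eta> \<and>
            (\<forall>S \<delta> s0 F. is_DFA \<Sigma> S \<delta> s0 F \<and> DFA_lang \<Sigma> \<delta> s0 F = IFA_lang \<Sigma> n M \<alpha> \<eta>
                 \<longrightarrow> card S \<ge> 2 ^ n)"
    using part2 by simp
qed

end
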